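(* Let the mesh, coefficients $a^{(n)}_{n-k}$, DCC kernels $p^{(n)}_{n-k}$ and consistency errors $R^n$ be as in the context (in particular $\tau_{n-1}\le\tau_n$ for $2\le n\le N$). Let $v\in C([0,T])\cap C^2((0,T])$ with $\int_0^T t|v''(t)|\,dt<\infty$. Then for every $1\le n\le N$, $$\sum_{j=1}^n p^{(n)}_{n-j}|R^j|\le 2\sum_{j=1}^n p^{(n)}_{n-j}a^{(j)}_0\int_{t_{j-3/2}}^{t_{j-1/2}}(t-t_{j-3/2})|v''(t)|\,dt .$$
   Context: Fix $T>0$, $0<\alpha<1$ and a mesh $0=t_0<t_1<\dots<t_N=T$ with step sizes $\tau_n=t_n-t_{n-1}$ satisfying $\tau_{n-1}\le\tau_n$ for $2\le n\le N$. Set $t_{-1/2}=t_0$, $t_{n-1/2}=t_{n-1}+\tau_n/2$ for $1\le n\le N$, $\tau_{1/2}=\tau_1/2$ and $\tau_{n-1/2}=(\tau_n+\tau_{n-1})/2$ for $n\ge 2$. Let $\omega_\gamma(t)=t^{\gamma-1}/\Gamma(\gamma)$ for $t>0$. For $1\le n\le N$ and $1\le k\le n$ define $$a^{(n)}_{n-k}=\frac{1}{\tau_{k-1/2}}\int_{t_{k-3/2}}^{t_{k-1/2}}\omega_{1-\alpha}(t_{n-1/2}-s)\,ds .$$ The discrete complementary convolution (DCC) kernels are defined by $p^{(n)}_0=1/a^{(n)}_0$ and $p^{(n)}_{n-k}=\frac{1}{a^{(k)}_0}\sum_{j=k+1}^n\big(a^{(j)}_{j-k-1}-a^{(j)}_{j-k}\big)p^{(n)}_{n-j}$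 for $1\le k\le n-1$; equivalently $\sum_{j=k}^n p^{(n)}_{n-j}a^{(j)}_{j-k}=1$ for all $1\le k\le n$. The Caputo derivative of order $\alpha$ is ${}^C_0D^\alpha_t v(t)=\int_0^t\omega_{1-\alpha}(t-s)v'(s)\,ds$, and the local consistency error at $t_{n-1/2}$ is $$R^n={}^C_0D^\alpha_t v(t_{n-1/2})-\sum_{k=1}^n a^{(n)}_{n-k}\big(v(t_{k-1/2})-v(t_{k-3/2})\big),\qquad 1\le n\le N.$$ *)

theory Defs
  imports "HOL-Analysis.Analysis"
begin

text \<open>Mesh t :: nat => real with t 0 = 0 < t 1 < ... < t N = T.
  Half-integer indices are shifted: thalf t k stands for t_{k-1/2} (k >= 1),
  thalf t 0 = t_0 stands for t_{-1/2}.\<close>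

definition tau :: "(nat \<Rightarrow> real) \<Rightarrow> nat \<Rightarrow> real" where
  "tau t n = t n - t (n - 1)"

definition thalf :: "(nat \<Rightarrow> real) \<Rightarrow> nat \<Rightarrow> real" where
  "thalf t k = (if k = 0 then t 0 else t (k - 1) + tau t k / 2)"

text \<open>tauhalf t k stands for tau_{k-1/2}, k >= 1.\<close>
definition tauhalf :: "(nat \<Rightarrow> real) \<Rightarrow> nat \<Rightarrow> real" where
  "tauhalf t k = (if k = 1 then tau t 1 / 2 else (tau t k + tau t (k - 1)) / 2)"

definition omega :: "real \<Rightarrow> real \<Rightarrow> real" where
  "omega \<gamma> x = x powr (\<gamma> - 1) / Gamma \<gamma>"

text \<open>acoef alpha t n k stands for a^{(n)}_{n-k}, 1 <= k <= n.\<close>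
definition acoef :: "real \<Rightarrow> (nat \<Rightarrow> real) \<Rightarrow> nat \<Rightarrow> nat \<Rightarrow> real" where
  "acoef \<alpha> t n k = (1 / tauhalf t k) *
     integral {thalf t (k - 1)..thalf t k} (\<lambda>s. omega (1 - \<alpha>) (thalf t n - s))"

text \<open>dcc A n k stands for p^{(n)}_{n-k} built from coefficients A (A n k = a^{(n)}_{n-k}).\<close>
function dcc_aux :: "(nat \<Rightarrow> nat \<Rightarrow> real) \<Rightarrow> nat \<Rightarrow> nat \<Rightarrow> real" where
  "dcc_aux A n k = (if n \<le> k then 1 / A n n
     else (1 / A k k) * (\<Sum>j\<in>{k+1..n}. (A j (k + 1) - A j k) * dcc_aux A n j))"
  by pat_completeness auto
termination by (relation "Wellfounded.measure (\<lambda>(A, n, k). n - k)") auto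

definition dcc :: "real \<Rightarrow> (nat \<Rightarrow> real) \<Rightarrow> nat \<Rightarrow> nat \<Rightarrow> real" where
  "dcc \<alpha> t n k = dcc_aux (acoef \<alpha> t) n k"

definition caputo :: "real \<Rightarrow> (real \<Rightarrow> real) \<Rightarrow> real \<Rightarrow> real" where
  "caputo \<alpha> v' x = integral {0..x} (\<lambda>s. omega (1 - \<alpha>) (x - s) * v' s)"

definition Rerr :: "real \<Rightarrow> (nat \<Rightarrow> real) \<Rightarrow> (real \<Rightarrow> real) \<Rightarrow> (real \<Rightarrow> real) \<Rightarrow> nat \<Rightarrow> real" where
  "Rerr \<alpha> t v v' n = caputo \<alpha> v' (thalf t n)
     - (\<Sum>k=1..n. acoef \<alpha> t n k * (v (thalf t k) - v (thalf t (k - 1))))"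

end

theory Submission
  imports Defs "HOL-Analysis.Analysis"
begin


lemma powr_tan_conv:
  fixes p y z :: real
  assumes "p < 0 \<or> p > 1" "z > 0" "y > 0"
  shows "z powr p + p * z powr (p - 1) * (y - z) \<le> y powr p"
proof -
  have "(\<lambda>x. p * x powr (p - 1)) z * (y - z) \<le> y powr p - z powr p"
  proof (rule f''_imp_f'[where C="{0<..}" and f'' = "\<lambda>x. p * (p - 1) * x powr (p - 1 - 1)"])
    show "DERIV (\<lambda>x. x powr p) x :> p * x powr (p - 1)" if "x \<in> {0<..}" for x
      using that by (intro has_real_derivative_powr) auto
    show "DERIV (\<lambda>x. p * x powr (p - 1)) x :> p * (p - 1) * x powr (p - 1 - 1)" if "x \<in> {0<..}" for x
      using that by (auto intro!: derivative_eq_intros)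
    show "0 \<le> p * (p - 1) * x powr (p - 1 - 1)" if "x \<in> {0<..}" for x
    proof -
      have "0 \<le> p * (p - 1)" using assms(1)
        by (auto simp: zero_le_mult_iff)
      then show ?thesis by simp
    qed
  qed (use assms in auto)
  then show ?thesis by simp
qed

lemma powr_tan_conc:
  fixes b y z :: real
  assumes "0 < b" "b < 1" "z > 0" "y \<ge> 0"
  shows "y powr b \<le> z powr b + b * z powr (b - 1) * (y - z)"
proof (cases "y = 0")
  case True
  have "z powr (b - 1) = z powr b / z" using assms by (simp add: powr_diff)
  then have zz: "z powr (b - 1) * z = z powr b"
    using assms by simp
  have e: "b * z powr (b - 1) * z = b * z powr b" using zz by (metis mult.assoc)
  have "b * z powr b \<le> z powr b" using assms by simp
  moreover have "b * z powr (b - 1) * (0 - z) = - (b * z powr (b - 1) * z)" by simp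
  ultimately have "z powr b + b * z powr (b - 1) * (0 - z) \<ge> 0" using e by linarith
  moreover have "b * z powr b \<le> z powr b" using assms by simp
  ultimately show ?thesis using True by simp
next
  case False
  hence yp: "y > 0" using assms by simp
  have "(\<lambda>x. - (b * x powr (b - 1))) z * (y - z) \<le> (-(y powr b)) - (-(z powr b))"
  proof (rule f''_imp_f'[where C="{0<..}" and f'' = "\<lambda>x. - (b * (b - 1) * x powr (b - 1 - 1))"])
    show "DERIV (\<lambda>x. - (x powr b)) x :> - (b * x powr (b - 1))" if "x \<in> {0<..}" for x
      using that by (intro DERIV_minus has_real_derivative_powr) auto
    show "DERIV (\<lambda>x. - (b * x powr (b - 1))) x :> - (b * (b - 1) * x powr (b - 1 - 1))" if "x \<in> {0<..}" for x
      using that by (auto intro!: derivative_eq_intros)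
    show "0 \<le> - (b * (b - 1) * x powr (b - 1 - 1))" if "x \<in> {0<..}" for x
    proof -
      have "b * (b - 1) \<le> 0" using assms
        by (auto simp: mult_le_0_iff)
      then show ?thesis by (simp add: mult_nonneg_nonpos2)
    qed
  qed (use assms yp in auto)
  then show ?thesis by simp
qed

lemma powr_chord:
  fixes b u w y :: real
  assumes "0 < b" "b < 1" "0 \<le> w" "w \<le> y" "y \<le> u"
  shows "(u powr b - y powr b) * (u - w) \<le> (u powr b - w powr b) * (u - y)"
proof (cases "y = 0")
  case True
  then have "w = 0" using assms by simp
  then show ?thesis using True by simp
next
  case False
  hence yp: "y > 0" using assms by simp
  have t1: "u powr b \<le> y powr b + b * y powr (b - 1) * (u - y)"
    using powr_tan_conc[OF assms(1,2) yp] assms by simp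
  have t2: "w powr b \<le> y powr b + b * y powr (b - 1) * (w - y)"
    using powr_tan_conc[OF assms(1,2) yp] assms by simp
  have "u powr b * (y - w) \<le> (y powr b + b * y powr (b - 1) * (u - y)) * (y - w)"
    using t1 assms by (intro mult_right_mono) auto
  moreover have "w powr b * (u - y) \<le> (y powr b + b * y powr (b - 1) * (w - y)) * (u - y)"
    using t2 assms by (intro mult_right_mono) auto
  ultimately have "u powr b * (y - w) + w powr b * (u - y) \<le> y powr b * (u - w)"
    by (simp add: algebra_simps)
  then show ?thesis by (simp add: algebra_simps)
qed

lemma powr_conv_chord:
  fixes p u w z :: real
  assumes "p < 0" "0 < w" "w \<le> z" "z \<le> u" "w < u"
  shows "z powr p \<le> (w powr p * (u - z) + u powr p * (z - w)) / (u - w)"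
proof -
  have zp: "z > 0" using assms by simp
  have t1: "z powr p + p * z powr (p - 1) * (u - z) \<le> u powr p"
    using powr_tan_conv[of p z u] assms zp by simp
  have t2: "z powr p + p * z powr (p - 1) * (w - z) \<le> w powr p"
    using powr_tan_conv[of p z w] assms zp by simp
  have "(z powr p + p * z powr (p - 1) * (u - z)) * (z - w) \<le> u powr p * (z - w)"
    using t1 assms by (intro mult_right_mono) auto
  moreover have "(z powr p + p * z powr (p - 1) * (w - z)) * (u - z) \<le> w powr p * (u - z)"
    using t2 assms by (intro mult_right_mono) auto
  ultimately have "z powr p * (u - w) \<le> w powr p * (u - z) + u powr p * (z - w)"
    by (simp add: algebra_simps)
  then show ?thesis using assms by (simp add: field_simps)
qed

lemma powr_trap:
  fixes b u w :: real
  assumes "0 < b" "b < 1" "0 < w" "w < u"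
  shows "2 * (u powr b - w powr b) \<le> b * (u - w) * (u powr (b - 1) + w powr (b - 1))"
proof -
  let ?g = "\<lambda>z::real. z powr (b - 1)"
  have i1: "(?g has_integral (u powr b / b - w powr b / b)) {w..u}"
  proof (rule fundamental_theorem_of_calculus)
    show "((\<lambda>z. z powr b / b) has_vector_derivative ?g z) (at z within {w..u})" if "z \<in> {w..u}" for z
    proof -
      have "z > 0" using that assms by auto
      then have "((\<lambda>z. z powr b / b) has_real_derivative (b * z powr (b - 1)) / b) (at z)"
        by (intro DERIV_cdivide has_real_derivative_powr)
      then show ?thesis using assms
        by (simp add: has_real_derivative_iff_has_vector_derivative[symmetric] has_field_derivative_at_within)
    qed
  qed (use assms in auto)
  define A where "A = ?g w" 
  define B where "B = ?g u"
  let ?C = "\<lambda>z. (A * (u * z - z*z/2) + B * (z*z/2 - w * z)) / (u - w)"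
  have i2: "((\<lambda>z. (A * (u - z) + B * (z - w)) / (u - w)) has_integral (?C u - ?C w)) {w..u}"
  proof (rule fundamental_theorem_of_calculus)
    show "(?C has_vector_derivative (A * (u - z) + B * (z - w)) / (u - w)) (at z within {w..u})" if "z \<in> {w..u}" for z
    proof -
      have "((\<lambda>z. A * (u * z - z*z/2) + B * (z*z/2 - w * z)) has_real_derivative (A * (u - z) + B * (z - w))) (at z)"
        by (rule derivative_eq_intros refl | simp)+
      then have "(?C has_real_derivative (A * (u - z) + B * (z - w)) / (u - w)) (at z)"
        by (rule DERIV_cdivide)
      then show ?thesis
        by (simp add: has_real_derivative_iff_has_vector_derivative[symmetric] has_field_derivative_at_within)
    qed
  qed (use assms in auto)
  have uw: "u - w \<noteq> 0" using assms by simp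
  have nn: "(A * (u * u - u*u/2) + B * (u*u/2 - w * u)) - (A * (u * w - w*w/2) + B * (w*w/2 - w * w)) = (A + B) * ((u - w) * (u - w) / 2)"
    by (simp add: algebra_simps)
  have "u powr b / b - w powr b / b \<le> ?C u - ?C w"
    by (rule has_integral_le[OF i1 i2]) (use powr_conv_chord[of "b - 1" w _ u] assms in \<open>auto simp: A_def B_def\<close>)
  also have "?C u - ?C w = ((A + B) * ((u - w) * (u - w) / 2)) / (u - w)"
    by (simp only: nn[symmetric] diff_divide_distrib)
  also have "\<dots> = (A + B) * (u - w) / 2"
    using uw by (simp add: field_simps)
  finally have "(u powr b - w powr b) / b \<le> (A + B) * (u - w) / 2" by (simp add: diff_divide_distrib)
  then show ?thesis using assms by (simp add: field_simps A_def B_def)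
qed


lemma D_bounds:
  fixes b G u w y :: real
  assumes b: "0 < b" "b < 1" and G: "G > 0" and uw: "0 \<le> w" "w < u" "w \<le> y" "y \<le> u"
  defines "A \<equiv> (u powr b - w powr b) / (b * G) / (u - w)"
  shows "(u powr b - y powr b) / (b * G) - A * (u - y) \<le> 0"
    and "(u powr b - y powr b) / (b * G) - A * (u - y) \<ge> - A * (u - y)"
    and "w > 0 \<Longrightarrow> (u powr b - y powr b) / (b * G) - A * (u - y) \<ge> - (A - u powr (b - 1) / G) * (u - y)"
proof -
  have bG: "b * G > 0" using b G by simp
  have uwp: "u - w > 0" using uw by simp
  have ch: "(u powr b - y powr b) * (u - w) \<le> (u powr b - w powr b) * (u - y)"
    using powr_chord[OF b uw(1) uw(3) uw(4)] .
  have Aeq: "A * (u - y) = (u powr b - w powr b) * (u - y) / (b * G) / (u - w)"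
    unfolding A_def by simp
  have "(u powr b - y powr b) / (b * G) = (u powr b - y powr b) * (u - w) / (b * G) / (u - w)"
    using uwp by simp
  also have "\<dots> \<le> (u powr b - w powr b) * (u - y) / (b * G) / (u - w)"
    using ch bG uwp by (intro divide_right_mono) auto
  finally show "(u powr b - y powr b) / (b * G) - A * (u - y) \<le> 0" using Aeq by simp
  have "y powr b \<le> u powr b" using uw b by (intro powr_mono2) auto
  then have "(u powr b - y powr b) / (b * G) \<ge> 0" using bG by simp
  then show "(u powr b - y powr b) / (b * G) - A * (u - y) \<ge> - A * (u - y)" by simp
  assume wp: "w > 0"
  have up: "u > 0" using wp uw by simp
  have "y powr b \<le> u powr b + b * u powr (b - 1) * (y - u)"
    using powr_tan_conc[OF b up] uw by simp
  then have "b * u powr (b - 1) * (u - y) \<le> u powr b - y powr b" by (simp add: algebra_simps)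
  then have "b * u powr (b - 1) * (u - y) / (b * G) \<le> (u powr b - y powr b) / (b * G)"
    using bG by (intro divide_right_mono) auto
  moreover have "b * u powr (b - 1) * (u - y) / (b * G) = u powr (b - 1) / G * (u - y)"
    using b G by simp
  ultimately show "(u powr b - y powr b) / (b * G) - A * (u - y) \<ge> - (A - u powr (b - 1) / G) * (u - y)"
    by (simp add: algebra_simps)
qed

lemma coef_ineq:
  fixes b G u w w' :: real
  assumes b: "0 < b" "b < 1" and G: "G > 0" and uw: "0 \<le> w'" "w' < w" "w < u"
  defines "A \<equiv> (u powr b - w powr b) / (b * G) / (u - w)"
    and "A' \<equiv> (w powr b - w' powr b) / (b * G) / (w - w')"
  shows "A - u powr (b - 1) / G \<le> A' - A" and "A \<le> A'"
proof -
  have bG: "b * G > 0" using b G by simp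
  have wp: "w > 0" using uw by simp
  have t1: "w' powr b \<le> w powr b + b * w powr (b - 1) * (w' - w)"
    using powr_tan_conc[OF b wp] uw by simp
  have "w powr (b - 1) / G \<le> A'"
  proof -
    have "b * w powr (b - 1) * (w - w') \<le> w powr b - w' powr b" using t1 by (simp add: algebra_simps)
    then have "b * w powr (b - 1) * (w - w') / (b * G) / (w - w') \<le> A'"
      unfolding A'_def using bG uw by (intro divide_right_mono) auto
    moreover have "b * w powr (b - 1) * (w - w') / (b * G) / (w - w') = w powr (b - 1) / G"
      using b G uw by simp
    ultimately show ?thesis by simp
  qed
  moreover have "2 * A \<le> (u powr (b - 1) + w powr (b - 1)) / G"
  proof -
    have tr: "2 * (u powr b - w powr b) \<le> b * (u - w) * (u powr (b - 1) + w powr (b - 1))"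
      using powr_trap[OF b wp uw(3)] .
    have "2 * A = 2 * (u powr b - w powr b) / (b * G) / (u - w)" unfolding A_def by simp
    also have "\<dots> \<le> b * (u - w) * (u powr (b - 1) + w powr (b - 1)) / (b * G) / (u - w)"
      using tr bG uw by (intro divide_right_mono) auto
    also have "\<dots> = (u powr (b - 1) + w powr (b - 1)) / G" using b G uw by simp
    finally show ?thesis .
  qed
  moreover have "A \<le> w powr (b - 1) / G"
  proof -
    have "u powr b \<le> w powr b + b * w powr (b - 1) * (u - w)"
      using powr_tan_conc[OF b wp] uw by simp
    then have "u powr b - w powr b \<le> b * w powr (b - 1) * (u - w)" by simp
    then have "A \<le> b * w powr (b - 1) * (u - w) / (b * G) / (u - w)"
      unfolding A_def using bG uw by (intro divide_right_mono) auto
    also have "\<dots> = w powr (b - 1) / G" using b G uw by simp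
    finally show ?thesis .
  qed
  ultimately show "A - u powr (b - 1) / G \<le> A' - A" and "A \<le> A'"
    by (simp_all add: add_divide_distrib)
qed

lemma coef_pos:
  fixes b G u w :: real
  assumes b: "0 < b" "b < 1" and G: "G > 0" and uw: "0 \<le> w" "w < u"
  shows "(u powr b - w powr b) / (b * G) / (u - w) > 0"
proof -
  have "w powr b < u powr b" using uw b by (intro powr_less_mono2) auto
  then show ?thesis using b G uw by simp
qed


lemma Wbound:
  fixes b G lo hi X s :: real
  assumes b: "0 < b" "b < 1" and G: "G > 0" and lh: "lo < hi" "hi \<le> X" and s: "s \<in> {lo..hi}"
  defines "A \<equiv> ((X - lo) powr b - (X - hi) powr b) / (b * G) / (hi - lo)"
  shows "\<bar>((X - lo) powr b - (X - s) powr b) / (b * G) - A * (s - lo)\<bar> \<le> A * (s - lo)"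
    and "hi < hi' \<Longrightarrow> hi' \<le> X \<Longrightarrow> \<bar>((X - lo) powr b - (X - s) powr b) / (b * G) - A * (s - lo)\<bar>
          \<le> (((X - hi) powr b - (X - hi') powr b) / (b * G) / (hi' - hi) - A) * (s - lo)"
proof -
  have uw: "0 \<le> X - hi" "X - hi < X - lo" "X - hi \<le> X - s" "X - s \<le> X - lo" using lh s by auto
  have e1: "(X - lo) - (X - s) = s - lo" "(X - lo) - (X - hi) = hi - lo" by simp_all
  note DB = D_bounds[OF b G uw]
  have A_eq: "A = ((X - lo) powr b - (X - hi) powr b) / (b * G) / ((X - lo) - (X - hi))" by (simp add: A_def)
  have d1: "((X - lo) powr b - (X - s) powr b) / (b * G) - A * (s - lo) \<le> 0"
    using DB(1) unfolding A_eq e1 by simp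
  have d2: "((X - lo) powr b - (X - s) powr b) / (b * G) - A * (s - lo) \<ge> - A * (s - lo)"
    using DB(2) unfolding A_eq e1 by simp
  show "\<bar>((X - lo) powr b - (X - s) powr b) / (b * G) - A * (s - lo)\<bar> \<le> A * (s - lo)"
  proof -
    have "- A * (s - lo) = -(A * (s - lo))" by simp
    moreover have "A > 0" using coef_pos[OF b G uw(1) uw(2)] unfolding A_eq .
    then have "A * (s - lo) \<ge> 0" using s by simp
    ultimately
    have key: "\<And>D Q::real. D \<le> 0 \<Longrightarrow> - Q \<le> D \<Longrightarrow> 0 \<le> Q \<Longrightarrow> \<bar>D\<bar> \<le> Q" by linarith
    show ?thesis by (rule key) (use d1 d2 \<open>- A * (s - lo) = -(A * (s - lo))\<close> \<open>A * (s - lo) \<ge> 0\<close> in auto)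
  qed
  assume h': "hi < hi'" "hi' \<le> X"
  have wp: "X - hi > 0" using h' by simp
  have d3: "((X - lo) powr b - (X - s) powr b) / (b * G) - A * (s - lo) \<ge> - (A - (X - lo) powr (b - 1) / G) * (s - lo)"
    using DB(3)[OF wp] unfolding A_eq e1 by simp
  have ww: "0 \<le> X - hi'" "X - hi' < X - hi" "X - hi < X - lo" using h' lh by auto
  have ci: "A - (X - lo) powr (b - 1) / G \<le> ((X - hi) powr b - (X - hi') powr b) / (b * G) / ((X - hi) - (X - hi')) - A"
    using coef_ineq(1)[OF b G ww] unfolding A_eq by simp
  have "(X - hi) - (X - hi') = hi' - hi" by simp
  then have ci': "A - (X - lo) powr (b - 1) / G \<le> ((X - hi) powr b - (X - hi') powr b) / (b * G) / (hi' - hi) - A"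
    using ci by simp
  have sl: "s - lo \<ge> 0" using s by simp
  have f39: "- (((X - hi) powr b - (X - hi') powr b) / (b * G) / (hi' - hi) - A) * (s - lo) \<le> - (A - (X - lo) powr (b - 1) / G) * (s - lo)"
    using mult_right_mono[OF ci' sl] by (simp only: mult_minus_left neg_le_iff_le)
  have f41: "0 \<le> (((X - hi) powr b - (X - hi') powr b) / (b * G) / (hi' - hi) - A) * (s - lo)"
  proof -
    have "A \<le> ((X - hi) powr b - (X - hi') powr b) / (b * G) / ((X - hi) - (X - hi'))"
      using coef_ineq(2)[OF b G ww] unfolding A_eq by simp
    then show ?thesis using sl \<open>(X - hi) - (X - hi') = hi' - hi\<close> by simp
  qed
  show "\<bar>((X - lo) powr b - (X - s) powr b) / (b * G) - A * (s - lo)\<bar>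
          \<le> (((X - hi) powr b - (X - hi') powr b) / (b * G) / (hi' - hi) - A) * (s - lo)"
  proof -
    have key: "\<And>D Q P Q'::real. D \<le> 0 \<Longrightarrow> P \<le> D \<Longrightarrow> Q' \<le> P \<Longrightarrow> Q' = - Q \<Longrightarrow> 0 \<le> Q \<Longrightarrow> \<bar>D\<bar> \<le> Q" by linarith
    show ?thesis by (rule key[OF d1 d3 f39 _ f41]) (simp only: mult_minus_left)
  qed
qed


lemma vprime_bound:
  fixes T s :: real and v' v'' :: "real \<Rightarrow> real"
  assumes "0 < s" "s \<le> T"
    and v_d2: "\<forall>x\<in>{0<..T}. (v' has_real_derivative v'' x) (at x within {0<..T})"
    and v''_cont: "continuous_on {0<..T} v''"
  shows "\<bar>v' s\<bar> \<le> \<bar>v' T\<bar> + integral {s..T} (\<lambda>u. \<bar>v'' u\<bar>)"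
proof -
  have sub: "{s..T} \<subseteq> {0<..T}" using assms by auto
  have "(v'' has_integral (v' T - v' s)) {s..T}"
  proof (rule fundamental_theorem_of_calculus)
    show "(v' has_vector_derivative v'' x) (at x within {s..T})" if "x \<in> {s..T}" for x
      using v_d2 that sub
      by (metis has_field_derivative_subset has_real_derivative_iff_has_vector_derivative subsetD)
  qed (use assms in auto)
  moreover have cs: "continuous_on {s..T} v''" using continuous_on_subset[OF v''_cont sub] .
  have "norm (integral {s..T} v'') \<le> integral {s..T} (\<lambda>u. \<bar>v'' u\<bar>)"
    by (rule Henstock_Kurzweil_Integration.integral_norm_bound_integral)
      (use cs in \<open>auto intro!: integrable_continuous_interval continuous_intros\<close>)
  ultimately have "\<bar>v' T - v' s\<bar> \<le> integral {s..T} (\<lambda>u. \<bar>v'' u\<bar>)"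
    by (simp add: integral_unique)
  then show ?thesis by linarith
qed

lemma svprime_lim:
  fixes T :: real and v' v'' :: "real \<Rightarrow> real"
  assumes T: "T > 0"
    and v_d2: "\<forall>x\<in>{0<..T}. (v' has_real_derivative v'' x) (at x within {0<..T})"
    and v''_cont: "continuous_on {0<..T} v''"
    and v''_int: "(\<lambda>x. x * \<bar>v'' x\<bar>) integrable_on {0..T}"
  shows "((\<lambda>s. s * v' s) \<longlongrightarrow> 0) (at_right 0)"
proof (rule tendstoI)
  fix e :: real assume e: "e > 0"
  define h where "h = (\<lambda>x. x * \<bar>v'' x\<bar>)"
  define F where "F = (\<lambda>d. integral {0..d} h)"
  define M where "M = integral {0..T} h"
  have hnn: "\<And>x. x \<ge> 0 \<Longrightarrow> h x \<ge> 0" by (simp add: h_def)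
  have hint: "\<And>a b. 0 \<le> a \<Longrightarrow> b \<le> T \<Longrightarrow> h integrable_on {a..b}"
    using v''_int unfolding h_def by (rule integrable_subinterval_real) auto
  have contF: "continuous_on {0..T} F"
    unfolding F_def by (rule indefinite_integral_continuous_1) (use v''_int h_def in simp)
  have F0: "F 0 = 0" by (simp add: F_def)
  obtain d where d: "d > 0" "\<And>x. x \<in> {0..T} \<Longrightarrow> dist x 0 < d \<Longrightarrow> dist (F x) (F 0) < e/2"
    using contF[unfolded continuous_on_iff] T e
    by (metis atLeastAtMost_iff half_gt_zero less_eq_real_def)
  define \<delta> where "\<delta> = min (d/2) T"
  have \<delta>: "0 < \<delta>" "\<delta> \<le> T" "\<delta> < d" using d T by (auto simp: \<delta>_def)
  have Fd: "F \<delta> < e/2" using d(2)[of \<delta>] \<delta> F0 by (auto simp: dist_real_def)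
  have Mnn: "M \<ge> 0" unfolding M_def by (rule integral_nonneg) (use hint hnn in auto)
  define K where "K = \<bar>v' T\<bar> + M / \<delta> + 1"
  have "M / \<delta> \<ge> 0" using Mnn \<delta> by simp
  then have Kp: "K > 0" by (simp add: K_def add_nonneg_pos)
  define \<eta> where "\<eta> = min \<delta> (e / (2 * K))"
  have \<eta>: "\<eta> > 0" using \<delta> e Kp by (auto simp: \<eta>_def)
  show "\<forall>\<^sub>F s in at_right 0. dist (s * v' s) 0 < e"
    unfolding eventually_at_right_field
  proof (intro exI[of _ \<eta>] conjI allI impI)
    show "0 < \<eta>" by (rule \<eta>)
    fix s :: real assume s: "0 < s" "s < \<eta>"
    have s\<delta>: "s < \<delta>" using s by (auto simp: \<eta>_def)
    have sK: "s * K < e / 2" using s Kp by (auto simp: \<eta>_def field_simps)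
    have cs: "continuous_on {s..T} v''" by (rule continuous_on_subset[OF v''_cont]) (use s in auto)
    have absint: "\<And>a b. s \<le> a \<Longrightarrow> b \<le> T \<Longrightarrow> (\<lambda>u. \<bar>v'' u\<bar>) integrable_on {a..b}"
      by (rule integrable_continuous_interval, rule continuous_intros, rule continuous_on_subset[OF cs]) auto
    have vb: "\<bar>v' s\<bar> \<le> \<bar>v' T\<bar> + integral {s..T} (\<lambda>u. \<bar>v'' u\<bar>)"
      by (rule vprime_bound[OF s(1) _ v_d2 v''_cont]) (use s\<delta> \<delta> in auto)
    have split: "integral {s..T} (\<lambda>u. \<bar>v'' u\<bar>) = integral {s..\<delta>} (\<lambda>u. \<bar>v'' u\<bar>) + integral {\<delta>..T} (\<lambda>u. \<bar>v'' u\<bar>)"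
      by (rule Henstock_Kurzweil_Integration.integral_combine[symmetric]) (use s\<delta> \<delta> absint in auto)
    have b1: "s * integral {s..\<delta>} (\<lambda>u. \<bar>v'' u\<bar>) \<le> F \<delta>"
    proof -
      have "s * integral {s..\<delta>} (\<lambda>u. \<bar>v'' u\<bar>) = integral {s..\<delta>} (\<lambda>u. s * \<bar>v'' u\<bar>)"
        by simp
      also have "\<dots> \<le> integral {s..\<delta>} h"
        by (rule integral_le) (use absint hint s \<delta> s\<delta> in \<open>auto simp: h_def intro!: mult_right_mono integrable_on_cmult_left\<close>)
      also have "\<dots> \<le> integral {0..\<delta>} h"
        by (rule integral_subset_le) (use hint hnn s \<delta> in auto)
      finally show ?thesis by (simp add: F_def)
    qed
    have b2: "s * integral {\<delta>..T} (\<lambda>u. \<bar>v'' u\<bar>) \<le> s / \<delta> * M"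
    proof -
      have eq: "s * integral {\<delta>..T} (\<lambda>u. \<bar>v'' u\<bar>) = s / \<delta> * integral {\<delta>..T} (\<lambda>u. \<delta> * \<bar>v'' u\<bar>)"
        using \<delta> by simp
      have i1: "integral {\<delta>..T} (\<lambda>u. \<delta> * \<bar>v'' u\<bar>) \<le> integral {\<delta>..T} h"
        by (rule integral_le) (use absint hint s \<delta> s\<delta> in \<open>auto simp: h_def intro!: mult_right_mono integrable_on_cmult_left\<close>)
      have i2: "integral {\<delta>..T} h \<le> M"
        unfolding M_def by (rule integral_subset_le) (use hint hnn s \<delta> in auto)
      have "s / \<delta> \<ge> 0" using s \<delta> by simp
      then have "s / \<delta> * integral {\<delta>..T} (\<lambda>u. \<delta> * \<bar>v'' u\<bar>) \<le> s / \<delta> * M"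
        using i1 i2 by (intro mult_left_mono) auto
      then show ?thesis using eq by simp
    qed
    have "\<bar>s * v' s\<bar> \<le> s * \<bar>v' T\<bar> + s * integral {s..T} (\<lambda>u. \<bar>v'' u\<bar>)"
      using vb s by (simp add: abs_mult distrib_left[symmetric] mult_left_mono)
    also have "\<dots> \<le> s * \<bar>v' T\<bar> + F \<delta> + s / \<delta> * M"
      using b1 b2 split by (simp add: distrib_left)
    also have "\<dots> = s * (\<bar>v' T\<bar> + M / \<delta>) + F \<delta>" by (simp add: algebra_simps)
    also have "\<dots> < e"
    proof -
      have "s * (\<bar>v' T\<bar> + M / \<delta>) \<le> s * K" using s by (intro mult_left_mono) (auto simp: K_def)
      then show ?thesis using sK Fd by linarith
    qed
    finally show "dist (s * v' s) 0 < e" by simp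
  qed
qed


lemma kint:
  fixes \<alpha> lo hi X :: real
  assumes "0 < \<alpha>" "\<alpha> < 1" "lo \<le> hi" "hi \<le> X"
  shows "((\<lambda>s. omega (1 - \<alpha>) (X - s)) has_integral
     (((X - lo) powr (1 - \<alpha>) - (X - hi) powr (1 - \<alpha>)) / ((1 - \<alpha>) * Gamma (1 - \<alpha>)))) {lo..hi}"
proof -
  define K where "K = (1 - \<alpha>) * Gamma (1 - \<alpha>)"
  have Kp: "K > 0" using assms by (simp add: K_def)
  define \<Psi> where "\<Psi> = (\<lambda>s. - ((X - s) powr (1 - \<alpha>)) / K)"
  have "((\<lambda>s. omega (1 - \<alpha>) (X - s)) has_integral (\<Psi> hi - \<Psi> lo)) {lo..hi}"
  proof (rule fundamental_theorem_of_calculus_interior_strong[where S="{}"])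
    show "continuous_on {lo..hi} \<Psi>"
    proof -
      have "continuous_on {lo..hi} (\<lambda>s. (X - s) powr (1 - \<alpha>))"
        by (rule continuous_on_powr') (use assms in \<open>auto intro!: continuous_intros\<close>)
      from continuous_on_divide[OF continuous_on_minus[OF this] continuous_on_const, of K] Kp
      show ?thesis unfolding \<Psi>_def by simp
    qed
    show "(\<Psi> has_vector_derivative omega (1 - \<alpha>) (X - x)) (at x)" if "x \<in> {lo<..<hi} - {}" for x
    proof -
      have xp: "X - x > 0" using that assms by auto
      have "((\<lambda>s. - ((X - s) powr (1 - \<alpha>)) / K) has_real_derivative
              - ((1 - \<alpha>) * (X - x) powr (1 - \<alpha> - of_nat 1) * (0 - 1)) / K) (at x)"
        by (intro DERIV_cdivide DERIV_minus DERIV_fun_powr DERIV_diff DERIV_const DERIV_ident xp)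
      moreover have "- ((1 - \<alpha>) * (X - x) powr (1 - \<alpha> - of_nat 1) * (0 - 1)) / K = omega (1 - \<alpha>) (X - x)"
        using Kp assms by (simp add: omega_def K_def)
      ultimately show ?thesis
        by (simp add: \<Psi>_def has_real_derivative_iff_has_vector_derivative[symmetric])
    qed
  qed (use assms in auto)
  moreover have "\<Psi> hi - \<Psi> lo = ((X - lo) powr (1 - \<alpha>) - (X - hi) powr (1 - \<alpha>)) / K"
    by (simp add: \<Psi>_def diff_divide_distrib)
  ultimately show ?thesis by (simp add: K_def)
qed

lemma core:
  fixes T \<alpha> X lo hi c :: real and v v' v'' :: "real \<Rightarrow> real"
  assumes alpha: "0 < \<alpha>" "\<alpha> < 1" and T: "T > 0"
    and lohi: "0 \<le> lo" "lo < hi" "hi \<le> X" "hi < T"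
    and v_cont: "continuous_on {0..T} v"
    and v_d1: "\<forall>x\<in>{0<..T}. (v has_real_derivative v' x) (at x within {0<..T})"
    and v_d2: "\<forall>x\<in>{0<..T}. (v' has_real_derivative v'' x) (at x within {0<..T})"
    and v''_cont: "continuous_on {0<..T} v''"
    and v''_int: "(\<lambda>x. x * \<bar>v'' x\<bar>) integrable_on {0..T}"
    and c: "c \<ge> 0"
    and Wb: "\<forall>s\<in>{lo..hi}. \<bar>((X - lo) powr (1 - \<alpha>) - (X - s) powr (1 - \<alpha>)) / ((1 - \<alpha>) * Gamma (1 - \<alpha>))
        - (((X - lo) powr (1 - \<alpha>) - (X - hi) powr (1 - \<alpha>)) / ((1 - \<alpha>) * Gamma (1 - \<alpha>)) / (hi - lo)) * (s - lo)\<bar>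
        \<le> c * (s - lo)"
  shows "\<exists>r. ((\<lambda>s. omega (1 - \<alpha>) (X - s) * v' s) has_integral
      ((((X - lo) powr (1 - \<alpha>) - (X - hi) powr (1 - \<alpha>)) / ((1 - \<alpha>) * Gamma (1 - \<alpha>)) / (hi - lo)) * (v hi - v lo) + r)) {lo..hi}
      \<and> \<bar>r\<bar> \<le> c * integral {lo..hi} (\<lambda>s. (s - lo) * \<bar>v'' s\<bar>)"
proof -
  define K where "K = (1 - \<alpha>) * Gamma (1 - \<alpha>)"
  have Kp: "K > 0" using alpha by (simp add: K_def)
  define P where "P = (\<lambda>s. (X - s) powr (1 - \<alpha>))"
  define A where "A = (P lo - P hi) / K / (hi - lo)"
  define W where "W = (\<lambda>s. (P lo - P s) / K - A * (s - lo))"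
  define f where "f = (\<lambda>s. omega (1 - \<alpha>) (X - s))"
  have Wb': "\<And>s. s \<in> {lo..hi} \<Longrightarrow> \<bar>W s\<bar> \<le> c * (s - lo)"
    using Wb by (simp add: W_def A_def P_def K_def)
  have W_lo: "W lo = 0" by (simp add: W_def)
  have W_hi: "W hi = 0" using lohi by (simp add: W_def A_def)
  have Pc: "continuous_on {lo..hi} P"
    unfolding P_def by (rule continuous_on_powr') (use lohi alpha in \<open>auto intro!: continuous_intros\<close>)
  have Wc: "continuous_on {lo..hi} W"
  proof -
    have "continuous_on {lo..hi} (\<lambda>s. (P lo - P s) / K)"
      using continuous_on_divide[OF continuous_on_diff[OF continuous_on_const Pc] continuous_on_const, of K] Kp
      by simp
    then show ?thesis unfolding W_def by (intro continuous_on_diff continuous_on_mult continuous_on_const continuous_on_id)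
  qed
  have Wd: "(W has_real_derivative (f s - A)) (at s)" if "s \<in> {lo<..<hi}" for s
  proof -
    have xp: "X - s > 0" using that lohi by auto
    have "((\<lambda>s. (P lo - P s) / K - A * (s - lo)) has_real_derivative
        (0 - ((1 - \<alpha>) * (X - s) powr (1 - \<alpha> - of_nat 1) * (0 - 1))) / K - A * (1 - 0)) (at s)"
      unfolding P_def
      by (intro DERIV_cdivide DERIV_diff DERIV_cmult DERIV_fun_powr DERIV_const DERIV_ident xp)
    moreover have "(0 - ((1 - \<alpha>) * (X - s) powr (1 - \<alpha> - of_nat 1) * (0 - 1))) / K - A * (1 - 0) = f s - A"
      using Kp alpha by (simp add: f_def omega_def K_def)
    ultimately show ?thesis by (simp add: W_def)
  qed
  have vd_at: "(v has_real_derivative v' s) (at s)" if "0 < s" "s < T" for s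
  proof -
    have "(v has_real_derivative v' s) (at s within {0<..<T})"
    proof -
      have a: "(v has_real_derivative v' s) (at s within {0<..T})" using v_d1 that by simp
      show ?thesis by (rule has_field_derivative_subset[OF a]) auto
    qed
    then show ?thesis using that at_within_open[of s "{0<..<T}"] by simp
  qed
  have v'd_at: "(v' has_real_derivative v'' s) (at s)" if "0 < s" "s < T" for s
  proof -
    have "(v' has_real_derivative v'' s) (at s within {0<..<T})"
    proof -
      have a: "(v' has_real_derivative v'' s) (at s within {0<..T})" using v_d2 that by simp
      show ?thesis by (rule has_field_derivative_subset[OF a]) auto
    qed
    then show ?thesis using that at_within_open[of s "{0<..<T}"] by simp
  qed
  have v'_isCont: "isCont v' s" if "0 < s" "s < T" for s
    using v'd_at[OF that] by (rule DERIV_isCont)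
  define \<Phi> where "\<Phi> = (\<lambda>s. W s * v' s)"
  have \<Phi>c: "continuous_on {lo..hi} \<Phi>"
    unfolding continuous_on_eq_continuous_within
  proof
    fix s assume s: "s \<in> {lo..hi}"
    show "continuous (at s within {lo..hi}) \<Phi>"
    proof (cases "s > 0")
      case True
      have "continuous (at s within {lo..hi}) W" using Wc s by (simp add: continuous_on_eq_continuous_within)
      moreover have "continuous (at s within {lo..hi}) v'"
        using v'_isCont[of s] True s lohi by (simp add: continuous_at_imp_continuous_at_within)
      ultimately show ?thesis unfolding \<Phi>_def by (rule continuous_mult)
    next
      case False
      then have s0: "s = 0" "lo = 0" using s lohi by auto
      have lim: "((\<lambda>s. s * v' s) \<longlongrightarrow> 0) (at_right 0)"
        by (rule svprime_lim[OF T v_d2 v''_cont v''_int])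
      have "(\<Phi> \<longlongrightarrow> 0) (at_right 0)"
      proof (rule Lim_null_comparison)
        show "((\<lambda>s. c * \<bar>s * v' s\<bar>) \<longlongrightarrow> 0) (at_right 0)"
          using tendsto_mult_right_zero[OF tendsto_rabs_zero[OF lim], of c] by simp
        have "\<forall>\<^sub>F x in at_right 0. x \<in> {0<..<hi}"
          using eventually_at_right_real[of 0 hi] lohi s0 by simp
        then show "\<forall>\<^sub>F x in at_right 0. norm (\<Phi> x) \<le> c * \<bar>x * v' x\<bar>"
        proof eventually_elim
          case (elim x)
          then have "\<bar>W x\<bar> \<le> c * x" using Wb'[of x] s0 by auto
          then have "\<bar>W x\<bar> * \<bar>v' x\<bar> \<le> c * x * \<bar>v' x\<bar>" by (rule mult_right_mono) simp
          then show ?case using elim by (simp add: \<Phi>_def abs_mult mult.assoc)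
        qed
      qed
      moreover have "\<Phi> 0 = 0" using W_lo s0 by (simp add: \<Phi>_def)
      ultimately show ?thesis
        using s0 lohi by (simp add: continuous_within at_within_Icc_at_right)
    qed
  qed
  have ftc: "((\<lambda>s. (f s - A) * v' s + W s * v'' s) has_integral (\<Phi> hi - \<Phi> lo)) {lo..hi}"
  proof (rule fundamental_theorem_of_calculus_interior_strong[where S="{}"])
    show "(\<Phi> has_vector_derivative (f s - A) * v' s + W s * v'' s) (at s)" if "s \<in> {lo<..<hi} - {}" for s
    proof -
      have s: "0 < s" "s < T" using that lohi by auto
      have ws: "s \<in> {lo<..<hi}" using that by simp
      have "(\<Phi> has_real_derivative (f s - A) * v' s + v'' s * W s) (at s)"
        unfolding \<Phi>_def by (rule DERIV_mult[OF Wd[OF ws] v'd_at[OF s]])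
      then show ?thesis by (simp add: has_real_derivative_iff_has_vector_derivative[symmetric] mult.commute)
    qed
  qed (use lohi \<Phi>c in auto)
  have \<Phi>0: "\<Phi> hi - \<Phi> lo = 0" by (simp add: \<Phi>_def W_lo W_hi)
  have hint: "(\<lambda>s. (s - lo) * \<bar>v'' s\<bar>) integrable_on {lo..hi}"
  proof (cases "lo = 0")
    case True
    have "(\<lambda>x. x * \<bar>v'' x\<bar>) integrable_on {0..hi}"
      by (rule integrable_subinterval_real[OF v''_int]) (use lohi in auto)
    then show ?thesis using True by simp
  next
    case False
    then have lp: "lo > 0" using lohi by simp
    have "continuous_on {lo..hi} v''" by (rule continuous_on_subset[OF v''_cont]) (use lp lohi in auto)
    then show ?thesis by (intro integrable_continuous_interval continuous_intros)
  qed
  have WVabs: "(\<lambda>s. W s * v'' s) absolutely_integrable_on {lo..hi}"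
    unfolding absolutely_integrable_on_Icc_iff_Ioo
  proof (rule measurable_bounded_by_integrable_imp_absolutely_integrable)
    have "continuous_on {lo<..<hi} (\<lambda>s. W s * v'' s)"
    proof (rule continuous_on_mult)
      show "continuous_on {lo<..<hi} W" by (rule continuous_on_subset[OF Wc]) auto
      show "continuous_on {lo<..<hi} v''" by (rule continuous_on_subset[OF v''_cont]) (use lohi in auto)
    qed
    then show "(\<lambda>s. W s * v'' s) \<in> borel_measurable (lebesgue_on {lo<..<hi})"
      by (rule continuous_imp_measurable_on_sets_lebesgue) simp
    show "{lo<..<hi} \<in> sets lebesgue" by simp
    show "(\<lambda>s. c * ((s - lo) * \<bar>v'' s\<bar>)) integrable_on {lo<..<hi}"
      using integrable_on_cmult_left[OF hint, of c] by (simp add: integrable_on_Icc_iff_Ioo[symmetric])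
    show "norm (W s * v'' s) \<le> c * ((s - lo) * \<bar>v'' s\<bar>)" if "s \<in> {lo<..<hi}" for s
    proof -
      have "\<bar>W s\<bar> * \<bar>v'' s\<bar> \<le> c * (s - lo) * \<bar>v'' s\<bar>"
        using Wb'[of s] that by (intro mult_right_mono) auto
      then show ?thesis by (simp add: abs_mult mult.assoc)
    qed
  qed
  then have WVint: "(\<lambda>s. W s * v'' s) integrable_on {lo..hi}" by (rule absolutely_integrable_on_def[THEN iffD1, THEN conjunct1])
  define IW where "IW = integral {lo..hi} (\<lambda>s. W s * v'' s)"
  have gint: "((\<lambda>s. (f s - A) * v' s) has_integral (- IW)) {lo..hi}"
  proof -
    have "((\<lambda>s. ((f s - A) * v' s + W s * v'' s) - W s * v'' s) has_integral (0 - IW)) {lo..hi}"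
      using has_integral_diff[OF ftc[unfolded \<Phi>0] integrable_integral[OF WVint]] by (simp add: IW_def)
    then show ?thesis by simp
  qed
  have vint: "(v' has_integral (v hi - v lo)) {lo..hi}"
  proof (rule fundamental_theorem_of_calculus_interior_strong[where S="{}"])
    show "continuous_on {lo..hi} v" by (rule continuous_on_subset[OF v_cont]) (use lohi in auto)
    show "(v has_vector_derivative v' s) (at s)" if "s \<in> {lo<..<hi} - {}" for s
      using vd_at[of s] that lohi by (simp add: has_real_derivative_iff_has_vector_derivative[symmetric])
  qed (use lohi in auto)
  have tot: "((\<lambda>s. f s * v' s) has_integral (A * (v hi - v lo) + (- IW))) {lo..hi}"
  proof -
    have "((\<lambda>s. A * v' s + (f s - A) * v' s) has_integral (A * (v hi - v lo) + (- IW))) {lo..hi}"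
      by (rule has_integral_add[OF has_integral_mult_right[OF vint] gint])
    then show ?thesis by (simp add: algebra_simps)
  qed
  have bound: "\<bar>- IW\<bar> \<le> c * integral {lo..hi} (\<lambda>s. (s - lo) * \<bar>v'' s\<bar>)"
  proof -
    have "norm IW \<le> integral {lo..hi} (\<lambda>s. c * ((s - lo) * \<bar>v'' s\<bar>))"
      unfolding IW_def
    proof (rule Henstock_Kurzweil_Integration.integral_norm_bound_integral[OF WVint])
      show "(\<lambda>s. c * ((s - lo) * \<bar>v'' s\<bar>)) integrable_on {lo..hi}"
        using integrable_on_cmult_left[OF hint, of c] by simp
      show "norm (W s * v'' s) \<le> c * ((s - lo) * \<bar>v'' s\<bar>)" if "s \<in> {lo..hi}" for s
      proof -
        have "\<bar>W s\<bar> * \<bar>v'' s\<bar> \<le> c * (s - lo) * \<bar>v'' s\<bar>"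
          using Wb'[of s] that by (intro mult_right_mono) auto
        then show ?thesis by (simp add: abs_mult mult.assoc)
      qed
    qed
    then show ?thesis by simp
  qed
  show ?thesis
    using tot bound unfolding f_def A_def P_def K_def by blast
qed


declare dcc_aux.simps[simp del]

lemma dcc_aux_eq: "dcc_aux A n k = (if n \<le> k then 1 / A n n
     else (1 / A k k) * (\<Sum>j\<in>{k+1..n}. (A j (k + 1) - A j k) * dcc_aux A n j))"
  by (rule dcc_aux.simps)

lemma dcc_nonneg:
  fixes A :: "nat \<Rightarrow> nat \<Rightarrow> real"
  assumes mon: "\<And>k j. 1 \<le> k \<Longrightarrow> k < j \<Longrightarrow> j \<le> n \<Longrightarrow> A j (k + 1) - A j k \<ge> 0"
    and pos: "\<And>k. 1 \<le> k \<Longrightarrow> k \<le> n \<Longrightarrow> A k k > 0"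
  shows "1 \<le> k \<Longrightarrow> k \<le> n \<Longrightarrow> dcc_aux A n k \<ge> 0"
proof (induction "n - k" arbitrary: k rule: less_induct)
  case less
  show ?case
  proof (cases "n \<le> k")
    case True
    then show ?thesis using pos[of n] less.prems by (subst dcc_aux_eq) simp
  next
    case False
    have "(\<Sum>j\<in>{k+1..n}. (A j (k + 1) - A j k) * dcc_aux A n j) \<ge> 0"
    proof (rule sum_nonneg)
      fix j assume j: "j \<in> {k+1..n}"
      have "dcc_aux A n j \<ge> 0" using less.hyps[of j] j less.prems by auto
      moreover have "A j (k + 1) - A j k \<ge> 0" using mon[of k j] j less.prems by auto
      ultimately show "(A j (k + 1) - A j k) * dcc_aux A n j \<ge> 0" by simp
    qed
    moreover have "1 / A k k \<ge> 0" using pos[of k] less.prems by simp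
    ultimately show ?thesis using False by (subst dcc_aux_eq) simp
  qed
qed

lemma dcc_rec:
  fixes A :: "nat \<Rightarrow> nat \<Rightarrow> real"
  assumes "k < n" "A k k \<noteq> 0"
  shows "dcc_aux A n k * A k k = (\<Sum>j\<in>{k+1..n}. (A j (k + 1) - A j k) * dcc_aux A n j)"
  using assms by (subst dcc_aux_eq) simp

lemma dcc_last:
  fixes A :: "nat \<Rightarrow> nat \<Rightarrow> real"
  assumes "A n n \<noteq> 0"
  shows "dcc_aux A n n * A n n = 1"
  using assms by (subst dcc_aux_eq) simp

lemma sum_swap_tri:
  fixes F :: "nat \<Rightarrow> nat \<Rightarrow> real"
  shows "(\<Sum>j=1..n. \<Sum>m=1..j. F j m) = (\<Sum>m=1..n. \<Sum>j=m..n. F j m)"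
proof (induction n)
  case 0
  then show ?case by simp
next
  case (Suc n)
  have "(\<Sum>m=1..Suc n. \<Sum>j=m..Suc n. F j m) = (\<Sum>m=1..Suc n. (\<Sum>j=m..n. F j m) + F (Suc n) m)"
    by (rule sum.cong) (auto simp: sum.cl_ivl_Suc)
  also have "\<dots> = (\<Sum>m=1..Suc n. \<Sum>j=m..n. F j m) + (\<Sum>m=1..Suc n. F (Suc n) m)"
    by (simp add: sum.distrib)
  also have "(\<Sum>m=1..Suc n. \<Sum>j=m..n. F j m) = (\<Sum>m=1..n. \<Sum>j=m..n. F j m)"
    by (simp add: sum.cl_ivl_Suc)
  finally show ?case using Suc by (simp add: sum.cl_ivl_Suc)
qed

lemma final_sum:
  fixes A :: "nat \<Rightarrow> nat \<Rightarrow> real" and E R :: "nat \<Rightarrow> real"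
  assumes mon: "\<And>k j. 1 \<le> k \<Longrightarrow> k < j \<Longrightarrow> j \<le> n \<Longrightarrow> A j (k + 1) - A j k \<ge> 0"
    and pos: "\<And>k. 1 \<le> k \<Longrightarrow> k \<le> n \<Longrightarrow> A k k > 0"
    and Enn: "\<And>m. 1 \<le> m \<Longrightarrow> m \<le> n \<Longrightarrow> E m \<ge> 0"
    and Rb: "\<And>j. 1 \<le> j \<Longrightarrow> j \<le> n \<Longrightarrow>
       \<bar>R j\<bar> \<le> (\<Sum>m=1..j. (if m = j then A j j else A j (m + 1) - A j m) * E m)"
  shows "(\<Sum>j=1..n. dcc_aux A n j * \<bar>R j\<bar>) \<le> 2 * (\<Sum>j=1..n. dcc_aux A n j * A j j * E j)"
proof -
  let ?p = "dcc_aux A n"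
  let ?c = "\<lambda>j m. (if m = j then A j j else A j (m + 1) - A j m)"
  have pnn: "\<And>j. 1 \<le> j \<Longrightarrow> j \<le> n \<Longrightarrow> ?p j \<ge> 0"
    using dcc_nonneg[of n A, OF mon pos] by blast
  have "(\<Sum>j=1..n. ?p j * \<bar>R j\<bar>) \<le> (\<Sum>j=1..n. ?p j * (\<Sum>m=1..j. ?c j m * E m))"
    by (rule sum_mono, rule mult_left_mono) (use pnn Rb in auto)
  also have "\<dots> = (\<Sum>j=1..n. \<Sum>m=1..j. ?p j * ?c j m * E m)"
    by (simp add: sum_distrib_left mult.assoc)
  also have "\<dots> = (\<Sum>m=1..n. \<Sum>j=m..n. ?p j * ?c j m * E m)"
    by (rule sum_swap_tri)
  also have "\<dots> = (\<Sum>m=1..n. E m * (\<Sum>j=m..n. ?p j * ?c j m))"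
    by (simp add: sum_distrib_left mult.commute mult.left_commute)
  also have "\<dots> \<le> (\<Sum>m=1..n. E m * (2 * (?p m * A m m)))"
  proof (rule sum_mono)
    fix m assume m: "m \<in> {1..n}"
    have split: "(\<Sum>j=m..n. ?p j * ?c j m) = ?p m * A m m + (\<Sum>j=m+1..n. ?p j * (A j (m + 1) - A j m))"
    proof -
      have "{m..n} = insert m {m+1..n}" using m by auto
      then have "(\<Sum>j=m..n. ?p j * ?c j m) = ?p m * ?c m m + (\<Sum>j=m+1..n. ?p j * ?c j m)"
        by simp
      also have "(\<Sum>j=m+1..n. ?p j * ?c j m) = (\<Sum>j=m+1..n. ?p j * (A j (m + 1) - A j m))"
        by (rule sum.cong) auto
      finally show ?thesis by simp
    qed
    have "(\<Sum>j=m+1..n. ?p j * (A j (m + 1) - A j m)) \<le> ?p m * A m m"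
    proof (cases "m < n")
      case True
      have "?p m * A m m = (\<Sum>j\<in>{m+1..n}. (A j (m + 1) - A j m) * ?p j)"
        using dcc_rec[OF True] pos[of m] m by auto
      then show ?thesis by (simp add: mult.commute)
    next
      case False
      then show ?thesis using pnn[of m] pos[of m] m by auto
    qed
    then have "(\<Sum>j=m..n. ?p j * ?c j m) \<le> 2 * (?p m * A m m)" using split by linarith
    then show "E m * (\<Sum>j=m..n. ?p j * ?c j m) \<le> E m * (2 * (?p m * A m m))"
      using Enn[of m] m by (intro mult_left_mono) auto
  qed
  also have "\<dots> = 2 * (\<Sum>j=1..n. ?p j * A j j * E j)"
    by (simp add: sum_distrib_left mult.commute mult.left_commute)
  finally show ?thesis .
qed


theorem lemma2p6:
  fixes T \<alpha> :: real and N n :: nat and t :: "nat \<Rightarrow> real"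
    and v v' v'' :: "real \<Rightarrow> real"
  assumes T_pos: "T > 0" and alpha: "0 < \<alpha>" "\<alpha> < 1"
    and N_pos: "N \<ge> 1"
    and t0: "t 0 = 0" and tN: "t N = T"
    and t_mono: "\<forall>i<N. t i < t (Suc i)"
    and tau_mono: "\<forall>k\<in>{2..N}. tau t (k - 1) \<le> tau t k"
    and v_cont: "continuous_on {0..T} v"
    and v_d1: "\<forall>x\<in>{0<..T}. (v has_real_derivative v' x) (at x within {0<..T})"
    and v_d2: "\<forall>x\<in>{0<..T}. (v' has_real_derivative v'' x) (at x within {0<..T})"
    and v''_cont: "continuous_on {0<..T} v''"
    and v''_int: "(\<lambda>x. x * \<bar>v'' x\<bar>) integrable_on {0..T}"
    and n: "1 \<le> n" "n \<le> N"
  shows "(\<Sum>j=1..n. dcc \<alpha> t n j * \<bar>Rerr \<alpha> t v v' j\<bar>)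
    \<le> 2 * (\<Sum>j=1..n. dcc \<alpha> t n j * acoef \<alpha> t j j *
        integral {thalf t (j - 1)..thalf t j} (\<lambda>x. (x - thalf t (j - 1)) * \<bar>v'' x\<bar>))"
proof -
  define x where "x = thalf t"
  have tlt: "t i < t k" if "i < k" "k \<le> N" for i k
    using that
  proof (induction k)
    case 0 then show ?case by simp
  next
    case (Suc k)
    have tk: "t k < t (Suc k)" using t_mono Suc.prems by auto
    show ?case
    proof (cases "i = k")
      case True then show ?thesis using tk by simp
    next
      case False
      then have "i < k" using Suc.prems by simp
      then have "t i < t k" using Suc.IH Suc.prems by simp
      then show ?thesis using tk by simp
    qed
  qed
  have tle: "t i \<le> t k" if "i \<le> k" "k \<le> N" for i k
    using tlt[of i k] that by (cases "i = k") auto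
  have tT: "t k \<le> T" if "k \<le> N" for k using tle[of k N] that tN by simp
  have x0: "x 0 = 0" by (simp add: x_def thalf_def t0)
  have xk: "x k = t (k - 1) + (t k - t (k - 1)) / 2" if "1 \<le> k" for k
    using that by (simp add: x_def thalf_def tau_def)
  have tkk: "t (k - 1) < t k" if "1 \<le> k" "k \<le> N" for k
    using tlt[of "k - 1" k] that by simp
  have half: "\<And>a b::real. a < b \<Longrightarrow> a < a + (b - a) / 2 \<and> a + (b - a) / 2 < b" by (auto simp: field_simps)
  have xgt: "t (k - 1) < x k" if "1 \<le> k" "k \<le> N" for k
    using half[OF tkk[OF that]] xk[OF that(1)] by simp
  have xlt_t: "x k < t k" if "1 \<le> k" "k \<le> N" for k
    using half[OF tkk[OF that]] xk[OF that(1)] by simp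
  have xle_t: "x k \<le> t k" if "k \<le> N" for k
    using xlt_t[of k] that by (cases "k = 0") (auto simp: x0 t0)
  have xstrict: "x i < x k" if "i < k" "k \<le> N" for i k
  proof -
    have "x i \<le> t i" using xle_t[of i] that by simp
    also have "t i \<le> t (k - 1)" using tle[of i "k - 1"] that by simp
    also have "t (k - 1) < x k" using xgt[of k] that by simp
    finally show ?thesis .
  qed
  have xmono: "x i \<le> x k" if "i \<le> k" "k \<le> N" for i k
    using xstrict[of i k] that by (cases "i = k") auto
  have xnn: "0 \<le> x k" if "k \<le> N" for k using xmono[of 0 k] that x0 by simp
  have xT: "x k < T" if "1 \<le> k" "k \<le> N" for k using xlt_t[OF that] tT[OF that(2)] by simp
  have xstep: "x k - x (k - 1) = tauhalf t k" if "1 \<le> k" for k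
  proof (cases "k = 1")
    case True then show ?thesis by (simp add: x_def thalf_def tauhalf_def tau_def)
  next
    case False
    then have k2: "2 \<le> k" using that by simp
    from le_Suc_ex[OF k2] obtain d where "k = 2 + d" by blast
    then have m: "k = Suc (Suc d)" by simp
    show ?thesis by (simp add: m x_def thalf_def tauhalf_def tau_def field_simps)
  qed
  let ?b = "1 - \<alpha>" and ?G = "Gamma (1 - \<alpha>)"
  have b: "0 < ?b" "?b < 1" using alpha by auto
  have G: "?G > 0" using alpha by simp
  have acoef_eq: "acoef \<alpha> t j m = ((x j - x (m - 1)) powr ?b - (x j - x m) powr ?b) / (?b * ?G) / (x m - x (m - 1))"
    if "1 \<le> m" "m \<le> j" "j \<le> N" for j m
  proof -
    have "((\<lambda>s. omega (1 - \<alpha>) (x j - s)) has_integral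
      (((x j - x (m - 1)) powr (1 - \<alpha>) - (x j - x m) powr (1 - \<alpha>)) / ((1 - \<alpha>) * Gamma (1 - \<alpha>)))) {x (m - 1)..x m}"
      by (rule kint[OF alpha]) (use xmono that in auto)
    then have "integral {x (m - 1)..x m} (\<lambda>s. omega (1 - \<alpha>) (x j - s)) =
      ((x j - x (m - 1)) powr (1 - \<alpha>) - (x j - x m) powr (1 - \<alpha>)) / ((1 - \<alpha>) * Gamma (1 - \<alpha>))"
      by (rule integral_unique)
    then show ?thesis using xstep[OF that(1)] by (simp add: acoef_def x_def[symmetric])
  qed
  have apos: "acoef \<alpha> t k k > 0" if "1 \<le> k" "k \<le> N" for k
  proof -
    have "0 < ((x k - x (k - 1)) powr ?b - 0 powr ?b) / (?b * ?G) / ((x k - x (k - 1)) - 0)"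
      by (rule coef_pos[OF b G]) (use xstrict[of "k - 1" k] that in auto)
    then show ?thesis using acoef_eq[of k k] that by simp
  qed
  have amon: "acoef \<alpha> t j (k + 1) - acoef \<alpha> t j k \<ge> 0" if "1 \<le> k" "k < j" "j \<le> N" for j k
  proof -
    have le: "((x j - x (k - 1)) powr ?b - (x j - x k) powr ?b) / (?b * ?G) / ((x j - x (k - 1)) - (x j - x k))
        \<le> ((x j - x k) powr ?b - (x j - x (k + 1)) powr ?b) / (?b * ?G) / ((x j - x k) - (x j - x (k + 1)))"
      by (rule coef_ineq(2)[OF b G]) (use xmono[of "k + 1" j] xstrict[of k "k + 1"] xstrict[of "k - 1" k] that in auto)
    have "acoef \<alpha> t j k = ((x j - x (k - 1)) powr ?b - (x j - x k) powr ?b) / (?b * ?G) / ((x j - x (k - 1)) - (x j - x k))"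
      using acoef_eq[of k j] that by simp
    moreover have "acoef \<alpha> t j (k + 1) = ((x j - x k) powr ?b - (x j - x (k + 1)) powr ?b) / (?b * ?G) / ((x j - x k) - (x j - x (k + 1)))"
      using acoef_eq[of "k + 1" j] that by simp
    ultimately show ?thesis using le by simp
  qed
  define E where "E = (\<lambda>m. integral {x (m - 1)..x m} (\<lambda>s. (s - x (m - 1)) * \<bar>v'' s\<bar>))"
  have Enn: "E m \<ge> 0" if "1 \<le> m" "m \<le> N" for m
  proof (cases "(\<lambda>s. (s - x (m - 1)) * \<bar>v'' s\<bar>) integrable_on {x (m - 1)..x m}")
    case True
    then show ?thesis unfolding E_def by (rule integral_nonneg) simp
  next
    case False
    then show ?thesis unfolding E_def by (simp add: not_integrable_integral)
  qed
  define c where "c = (\<lambda>j m. if m = j then acoef \<alpha> t j j else acoef \<alpha> t j (m + 1) - acoef \<alpha> t j m)"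
  have Rb: "\<bar>Rerr \<alpha> t v v' j\<bar> \<le> (\<Sum>m=1..j. c j m * E m)" if j: "1 \<le> j" "j \<le> n" for j
  proof -
    have jN: "j \<le> N" using j n by simp
    have "\<forall>m\<in>{1..j}. \<exists>r. ((\<lambda>s. omega (1 - \<alpha>) (x j - s) * v' s) has_integral
        (acoef \<alpha> t j m * (v (x m) - v (x (m - 1))) + r)) {x (m - 1)..x m} \<and> \<bar>r\<bar> \<le> c j m * E m"
    proof
      fix m assume m: "m \<in> {1..j}"
      have lohi: "0 \<le> x (m - 1)" "x (m - 1) < x m" "x m \<le> x j" "x m < T"
        using xnn[of "m - 1"] xstrict[of "m - 1" m] xmono[of m j] xT[of m] m jN by auto
      have cnn: "c j m \<ge> 0"
        using apos[of j] amon[of m j] m jN j by (auto simp: c_def)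
      have Wb: "\<forall>s\<in>{x (m - 1)..x m}. \<bar>((x j - x (m - 1)) powr (1 - \<alpha>) - (x j - s) powr (1 - \<alpha>)) / ((1 - \<alpha>) * Gamma (1 - \<alpha>))
        - (((x j - x (m - 1)) powr (1 - \<alpha>) - (x j - x m) powr (1 - \<alpha>)) / ((1 - \<alpha>) * Gamma (1 - \<alpha>)) / (x m - x (m - 1))) * (s - x (m - 1))\<bar>
        \<le> c j m * (s - x (m - 1))"
      proof
        fix s assume s: "s \<in> {x (m - 1)..x m}"
        show "\<bar>((x j - x (m - 1)) powr (1 - \<alpha>) - (x j - s) powr (1 - \<alpha>)) / ((1 - \<alpha>) * Gamma (1 - \<alpha>))
        - (((x j - x (m - 1)) powr (1 - \<alpha>) - (x j - x m) powr (1 - \<alpha>)) / ((1 - \<alpha>) * Gamma (1 - \<alpha>)) / (x m - x (m - 1))) * (s - x (m - 1))\<bar>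
        \<le> c j m * (s - x (m - 1))"
        proof (cases "m = j")
          case True
          show ?thesis
            using Wbound(1)[OF b G lohi(2,3) s] acoef_eq[of j j] True j jN by (simp add: c_def)
        next
          case False
          then have mj: "m < j" using m by simp
          have h': "x m < x (m + 1)" "x (m + 1) \<le> x j"
            using xstrict[of m "m + 1"] xmono[of "m + 1" j] mj jN by auto
          show ?thesis
            using Wbound(2)[OF b G lohi(2,3) s h'] acoef_eq[of "m + 1" j] acoef_eq[of m j] mj m jN
            by (simp add: c_def)
        qed
      qed
      obtain r where r: "((\<lambda>s. omega (1 - \<alpha>) (x j - s) * v' s) has_integral
        ((((x j - x (m - 1)) powr (1 - \<alpha>) - (x j - x m) powr (1 - \<alpha>)) / ((1 - \<alpha>) * Gamma (1 - \<alpha>)) / (x m - x (m - 1))) * (v (x m) - v (x (m - 1))) + r)) {x (m - 1)..x m}"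
        "\<bar>r\<bar> \<le> c j m * integral {x (m - 1)..x m} (\<lambda>s. (s - x (m - 1)) * \<bar>v'' s\<bar>)"
        using core[OF alpha T_pos lohi v_cont v_d1 v_d2 v''_cont v''_int cnn Wb] by blast
      show "\<exists>r. ((\<lambda>s. omega (1 - \<alpha>) (x j - s) * v' s) has_integral
        (acoef \<alpha> t j m * (v (x m) - v (x (m - 1))) + r)) {x (m - 1)..x m} \<and> \<bar>r\<bar> \<le> c j m * E m"
        using r acoef_eq[of m j] m jN unfolding E_def by auto
    qed
    then obtain r where r: "\<And>m. m \<in> {1..j} \<Longrightarrow> ((\<lambda>s. omega (1 - \<alpha>) (x j - s) * v' s) has_integral
        (acoef \<alpha> t j m * (v (x m) - v (x (m - 1))) + r m)) {x (m - 1)..x m}"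
      "\<And>m. m \<in> {1..j} \<Longrightarrow> \<bar>r m\<bar> \<le> c j m * E m"
      by metis
    have comb: "((\<lambda>s. omega (1 - \<alpha>) (x j - s) * v' s) has_integral
        (\<Sum>m=1..k. acoef \<alpha> t j m * (v (x m) - v (x (m - 1))) + r m)) {0..x k}" if "k \<le> j" for k
      using that
    proof (induction k)
      case 0 then show ?case using x0 by (simp add: has_integral_refl)
    next
      case (Suc k)
      have "((\<lambda>s. omega (1 - \<alpha>) (x j - s) * v' s) has_integral
        ((\<Sum>m=1..k. acoef \<alpha> t j m * (v (x m) - v (x (m - 1))) + r m) +
         (acoef \<alpha> t j (Suc k) * (v (x (Suc k)) - v (x k)) + r (Suc k)))) {0..x (Suc k)}"
      proof (rule has_integral_combine)
        show "0 \<le> x k" using xnn[of k] Suc.prems jN by simp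
        show "x k \<le> x (Suc k)" using xmono[of k "Suc k"] Suc.prems jN by simp
        show "((\<lambda>s. omega (1 - \<alpha>) (x j - s) * v' s) has_integral
          (\<Sum>m=1..k. acoef \<alpha> t j m * (v (x m) - v (x (m - 1))) + r m)) {0..x k}"
          using Suc by simp
        show "((\<lambda>s. omega (1 - \<alpha>) (x j - s) * v' s) has_integral
          (acoef \<alpha> t j (Suc k) * (v (x (Suc k)) - v (x k)) + r (Suc k))) {x k..x (Suc k)}"
          using r(1)[of "Suc k"] Suc.prems by simp
      qed
      then show ?case by simp
    qed
    have cap: "caputo \<alpha> v' (x j) = (\<Sum>m=1..j. acoef \<alpha> t j m * (v (x m) - v (x (m - 1))) + r m)"
      unfolding caputo_def by (rule integral_unique[OF comb]) simp
    have "Rerr \<alpha> t v v' j = (\<Sum>m=1..j. r m)"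
      unfolding Rerr_def x_def[symmetric] cap by (simp add: sum.distrib)
    then have "\<bar>Rerr \<alpha> t v v' j\<bar> \<le> (\<Sum>m=1..j. \<bar>r m\<bar>)" by (simp add: sum_abs)
    also have "\<dots> \<le> (\<Sum>m=1..j. c j m * E m)" by (rule sum_mono) (use r(2) in auto)
    finally show ?thesis .
  qed
  have "(\<Sum>j=1..n. dcc_aux (acoef \<alpha> t) n j * \<bar>Rerr \<alpha> t v v' j\<bar>)
      \<le> 2 * (\<Sum>j=1..n. dcc_aux (acoef \<alpha> t) n j * acoef \<alpha> t j j * E j)"
  proof (rule final_sum)
    show "\<And>k j. 1 \<le> k \<Longrightarrow> k < j \<Longrightarrow> j \<le> n \<Longrightarrow> 0 \<le> acoef \<alpha> t j (k + 1) - acoef \<alpha> t j k"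
      using amon n by simp
    show "\<And>k. 1 \<le> k \<Longrightarrow> k \<le> n \<Longrightarrow> 0 < acoef \<alpha> t k k" using apos n by simp
    show "\<And>m. 1 \<le> m \<Longrightarrow> m \<le> n \<Longrightarrow> 0 \<le> E m" using Enn n by simp
    show "\<And>j. 1 \<le> j \<Longrightarrow> j \<le> n \<Longrightarrow> \<bar>Rerr \<alpha> t v v' j\<bar> \<le> (\<Sum>m = 1..j. (if m = j then acoef \<alpha> t j j else acoef \<alpha> t j (m + 1) - acoef \<alpha> t j m) * E m)"
      using Rb by (simp add: c_def)
  qed
  then show ?thesis by (simp add: dcc_def E_def x_def)
qed


end
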